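(* There are infinitely many pairwise non-isomorphic $2$-semiequivelar maps (tilings) on the plane $\mathbb{R}^2$.
   Context: A map is a polyhedral map: a cellular embedding of a connected graph in a surface such that the intersection of any two distinct faces is empty, a single vertex, or a single edge. For a vertex $u$, the faces containing $u$ form a cyclic sequence (the face-cycle at $u$); if this cyclic sequence consists of consecutive blocks of $n_1$ $p_1$-gons, then $n_2$ $p_2$-gons, ..., then $n_k$ $p_k$-gons, with cyclically consecutive $p_i$ distinct, then $u$ is said to have type $[p_1^{n_1},\dots,p_k^{n_k}]$. A map $K$ is $2$-semiequivelar of type $[W;Z]$ if every vertex of $K$ has type $W$ or type $Z$. *)

theory Defs
  imports "HOL-Analysis.Analysis"
begin

text \<open>A map on the plane (identified with the complex plane) is given by a set F of
faces, each a cyclic list of vertices (vertices are points of the plane), together with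
an assignment of an arc to every edge (an edge being an unordered pair of cyclically
consecutive vertices of some face).\<close>

definition face_edges :: "'a list \<Rightarrow> 'a set set" where
  "face_edges f = {{f ! i, f ! ((i + 1) mod length f)} | i. i < length f}"

definition map_vertices :: "'a list set \<Rightarrow> 'a set" where
  "map_vertices F = \<Union> (set ` F)"

definition map_edges :: "'a list set \<Rightarrow> 'a set set" where
  "map_edges F = \<Union> (face_edges ` F)"

definition graph_image :: "complex list set \<Rightarrow> (complex set \<Rightarrow> real \<Rightarrow> complex) \<Rightarrow> complex set" where
  "graph_image F \<gamma> = (\<Union>e\<in>map_edges F. path_image (\<gamma> e))"

definition face_boundary :: "(complex set \<Rightarrow> real \<Rightarrow> complex) \<Rightarrow> complex list \<Rightarrow> complex set" where
  "face_boundary \<gamma> f = (\<Union>e\<in>face_edges f. path_image (\<gamma> e))"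

definition face_region :: "(complex set \<Rightarrow> real \<Rightarrow> complex) \<Rightarrow> complex list \<Rightarrow> complex set" where
  "face_region \<gamma> f = face_boundary \<gamma> f \<union> inside (face_boundary \<gamma> f)"

text \<open>Polyhedral map on the plane: a cellular embedding of a connected graph in R^2
whose faces are closed 2-cells (closed Jordan regions bounded by the face cycles),
covering the plane, locally finite, with the polyhedral intersection property.\<close>

definition polyhedral_plane_map :: "complex list set \<Rightarrow> (complex set \<Rightarrow> real \<Rightarrow> complex) \<Rightarrow> bool" where
  "polyhedral_plane_map F \<gamma> \<longleftrightarrow>
     F \<noteq> {} \<and>
     (\<forall>f\<in>F. distinct f \<and> length f \<ge> 3) \<and>
     (\<forall>e\<in>map_edges F. arc (\<gamma> e) \<and> {pathstart (\<gamma> e), pathfinish (\<gamma> e)} = e) \<and>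
     (\<forall>e\<in>map_edges F. \<forall>e'\<in>map_edges F. e \<noteq> e' \<longrightarrow>
         path_image (\<gamma> e) \<inter> path_image (\<gamma> e') \<subseteq> e \<inter> e') \<and>
     (\<forall>v\<in>map_vertices F. \<forall>e\<in>map_edges F. v \<in> path_image (\<gamma> e) \<longrightarrow> v \<in> e) \<and>
     connected (graph_image F \<gamma>) \<and>
     (\<Union>f\<in>F. face_region \<gamma> f) = UNIV \<and>
     (\<forall>f\<in>F. inside (face_boundary \<gamma> f) \<inter> graph_image F \<gamma> = {}) \<and>
     (\<forall>f\<in>F. \<forall>g\<in>F. f \<noteq> g \<longrightarrow> inside (face_boundary \<gamma> f) \<inter> inside (face_boundary \<gamma> g) = {}) \<and>
     (\<forall>K. compact K \<longrightarrow> finite {f\<in>F. face_region \<gamma> f \<inter> K \<noteq> {}}) \<and>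
     (\<forall>f\<in>F. \<forall>g\<in>F. f \<noteq> g \<longrightarrow>
         set f \<inter> set g = {} \<or> card (set f \<inter> set g) = 1 \<or>
         (set f \<inter> set g \<in> face_edges f \<and> set f \<inter> set g \<in> face_edges g))"

definition face_cycle :: "'a list set \<Rightarrow> 'a \<Rightarrow> 'a list list \<Rightarrow> bool" where
  "face_cycle F u fs \<longleftrightarrow> distinct fs \<and> set fs = {f\<in>F. u \<in> set f} \<and>
     (\<forall>i<length fs. \<exists>w. {u, w} \<in> face_edges (fs ! i) \<and>
                          {u, w} \<in> face_edges (fs ! ((i + 1) mod length fs)))"

text \<open>A vertex type [p_1^n_1, ..., p_k^n_k] is the list [(p_1,n_1), ..., (p_k,n_k)].\<close>

definition expand_type :: "(nat \<times> nat) list \<Rightarrow> nat list" where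
  "expand_type W = concat (map (\<lambda>(p, n). replicate n p) W)"

definition valid_type :: "(nat \<times> nat) list \<Rightarrow> bool" where
  "valid_type W \<longleftrightarrow> W \<noteq> [] \<and> (\<forall>(p, n)\<in>set W. n \<ge> 1) \<and>
     (length W \<ge> 2 \<longrightarrow> (\<forall>i<length W. fst (W ! i) \<noteq> fst (W ! ((i + 1) mod length W))))"

definition has_type :: "'a list set \<Rightarrow> 'a \<Rightarrow> (nat \<times> nat) list \<Rightarrow> bool" where
  "has_type F u W \<longleftrightarrow> (\<exists>fs. face_cycle F u fs \<and> map length fs = expand_type W)"

definition two_semiequivelar :: "'a list set \<Rightarrow> bool" where
  "two_semiequivelar F \<longleftrightarrow> (\<exists>W Z. valid_type W \<and> valid_type Z \<and>
     (\<forall>u\<in>map_vertices F. has_type F u W \<or> has_type F u Z))"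

definition cyc_equiv :: "'a list \<Rightarrow> 'a list \<Rightarrow> bool" where
  "cyc_equiv xs ys \<longleftrightarrow> (\<exists>n. ys = rotate n xs \<or> ys = rotate n (rev xs))"

definition map_iso :: "'a list set \<Rightarrow> 'b list set \<Rightarrow> bool" where
  "map_iso F1 F2 \<longleftrightarrow> (\<exists>\<phi>. bij_betw \<phi> (map_vertices F1) (map_vertices F2) \<and>
     (\<forall>f\<in>F1. \<exists>g\<in>F2. cyc_equiv (map \<phi> f) g) \<and>
     (\<forall>g\<in>F2. \<exists>f\<in>F1. cyc_equiv (map \<phi> f) g))"

end

theory Submission
  imports Defs
begin

declare upt_Suc[simp del]

definition P :: "int \<Rightarrow> int \<Rightarrow> complex" where
  "P c d = Complex (of_int c) (of_int d)"

lemma P_inj[simp]: "P a b = P c d \<longleftrightarrow> a = c \<and> b = d"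
  by (simp add: P_def)

lemma Re_P[simp]: "Re (P a b) = of_int a" and Im_P[simp]: "Im (P a b) = of_int b"
  by (simp_all add: P_def)

definition rp :: "nat \<Rightarrow> int \<Rightarrow> int \<Rightarrow> nat \<Rightarrow> complex" where
  "rp w x y t = (if t \<le> w then P (x + int t) y else P (x + int (2*w+1-t)) (y+1))"

definition rect :: "nat \<Rightarrow> int \<Rightarrow> int \<Rightarrow> complex list" where
  "rect w x y = map (rp w x y) [0..<2*w+2]"

definition H :: "int \<Rightarrow> int \<Rightarrow> complex set" where "H x y = {P x y, P (x+1) y}"
definition V :: "int \<Rightarrow> int \<Rightarrow> complex set" where "V x y = {P x y, P x (y+1)}"

lemma length_rect[simp]: "length (rect w x y) = 2*w+2" by (simp add: rect_def)

lemma nth_rect: "i < 2*w+2 \<Longrightarrow> rect w x y ! i = rp w x y i"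
  by (simp add: rect_def)

lemma mem_rect: "P c d \<in> set (rect w x y) \<longleftrightarrow> x \<le> c \<and> c \<le> x + int w \<and> (d = y \<or> d = y+1)"
proof
  assume "P c d \<in> set (rect w x y)"
  then obtain t where t: "t < 2*w+2" "P c d = rp w x y t" by (auto simp: rect_def)
  then show "x \<le> c \<and> c \<le> x + int w \<and> (d = y \<or> d = y+1)"
    by (auto simp: rp_def split: if_splits)
next
  assume a: "x \<le> c \<and> c \<le> x + int w \<and> (d = y \<or> d = y+1)"
  show "P c d \<in> set (rect w x y)"
  proof (cases "d = y")
    case True
    have "rp w x y (nat (c - x)) = P c d" using a True by (auto simp: rp_def)
    moreover have "nat (c - x) < 2*w+2" using a by auto
    ultimately show ?thesis unfolding rect_def by (metis atLeastLessThan_iff image_eqI le0 set_map set_upt)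
  next
    case False
    then have d: "d = y+1" using a by auto
    define t where "t = 2*w+1 - nat (c-x)"
    have "t > w" using a by (auto simp: t_def)
    moreover have "int (2*w+1-t) = c - x" using a by (auto simp: t_def)
    ultimately have "rp w x y t = P c d" using d by (auto simp: rp_def)
    moreover have "t < 2*w+2" by (auto simp: t_def)
    ultimately show ?thesis unfolding rect_def by (metis atLeastLessThan_iff image_eqI le0 set_map set_upt)
  qed
qed

lemma rect_elem: "z \<in> set (rect w x y) \<Longrightarrow> \<exists>c d. z = P c d"
  by (auto simp: rect_def rp_def)

lemma distinct_rect: "distinct (rect w x y)"
  unfolding rect_def distinct_map
proof
  show "inj_on (rp w x y) (set [0..<2 * w + 2])"
    by (rule inj_onI) (auto simp: rp_def split: if_splits)
qed simp

lemma rp_lo: "t \<le> w \<Longrightarrow> rp w x y t = P (x + int t) y" by (simp add: rp_def)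
lemma rp_hi: "w < t \<Longrightarrow> t \<le> 2*w+1 \<Longrightarrow> rp w x y t = P (x + (2*int w + 1 - int t)) (y+1)"
  by (simp add: rp_def of_nat_diff)

lemma face_edges_rect:
  assumes "w \<ge> 1"
  shows "face_edges (rect w x y) = {H (x + int t) y | t. t < w} \<union> {H (x + int t) (y+1) | t. t < w} \<union> {V x y, V (x + int w) y}"
  (is "?L = ?R")
proof
  show "?L \<subseteq> ?R"
  proof
    fix e assume "e \<in> ?L"
    then obtain i where i: "i < 2*w+2" "e = {rect w x y ! i, rect w x y ! ((i+1) mod (2*w+2))}"
      by (auto simp: face_edges_def)
    consider "i < w" | "i = w" | "w < i \<and> i < 2*w+1" | "i = 2*w+1" using i by linarith
    then show "e \<in> ?R"
    proof cases
      case 1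
      have a: "rect w x y ! i = P (x + int i) y" using 1 by (simp add: nth_rect rp_lo)
      have b: "rect w x y ! ((i+1) mod (2*w+2)) = P (x + int i + 1) y" using 1
        by (simp add: nth_rect rp_lo add.assoc)
      have "e = H (x + int i) y" using i(2) unfolding a b H_def .
      then show ?thesis using 1 by blast
    next
      case 2
      have a: "rect w x y ! i = P (x + int w) y" using 2 by (simp add: nth_rect rp_lo)
      have b: "rect w x y ! ((i+1) mod (2*w+2)) = P (x + int w) (y+1)" using 2
        by (simp add: nth_rect rp_hi)
      have "e = V (x + int w) y" using i(2) unfolding a b V_def .
      then show ?thesis by blast
    next
      case 3
      have a: "rect w x y ! i = P (x + int (2*w-i) + 1) (y+1)" using 3 by (simp add: nth_rect rp_hi of_nat_diff)
      have b: "rect w x y ! ((i+1) mod (2*w+2)) = P (x + int (2*w-i)) (y+1)" using 3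
        by (simp add: nth_rect rp_hi of_nat_diff)
      have "e = H (x + int (2*w-i)) (y+1)" using i(2) unfolding a b H_def by blast
      moreover have "2*w-i < w" using 3 assms by linarith
      ultimately show ?thesis by blast
    next
      case 4
      have a: "rect w x y ! i = P x (y+1)" using 4 by (simp add: nth_rect rp_hi)
      have b: "rect w x y ! ((i+1) mod (2*w+2)) = P x y" using 4
        by (simp add: nth_rect rp_lo)
      have "e = V x y" using i(2) unfolding a b V_def by blast
      then show ?thesis by blast
    qed
  qed
next
  have ed: "{rect w x y ! i, rect w x y ! ((i+1) mod (2*w+2))} \<in> ?L" if "i < 2*w+2" for i
    using that unfolding face_edges_def by auto
  show "?R \<subseteq> ?L"
  proof
    fix e assume "e \<in> ?R"
    then consider t where "t < w" "e = H (x + int t) y" | t where "t < w" "e = H (x + int t) (y+1)"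
      | "e = V x y" | "e = V (x + int w) y" by blast
    then show "e \<in> ?L"
    proof cases
      case (1 t)
      have a: "rect w x y ! t = P (x + int t) y" using 1 by (simp add: nth_rect rp_lo)
      have b: "rect w x y ! ((t+1) mod (2*w+2)) = P (x + int t + 1) y" using 1
        by (simp add: nth_rect rp_lo add.assoc)
      show ?thesis using ed[of t] 1 unfolding a b H_def by simp
    next
      case (2 t)
      have a: "rect w x y ! (2*w-t) = P (x + int t + 1) (y+1)" using 2 by (simp add: nth_rect rp_hi of_nat_diff)
      have b: "rect w x y ! ((2*w-t+1) mod (2*w+2)) = P (x + int t) (y+1)" using 2
        by (simp add: nth_rect rp_hi of_nat_diff)
      have "e = {rect w x y ! (2*w-t), rect w x y ! ((2*w-t+1) mod (2*w+2))}"
        unfolding a b 2 H_def by blast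
      then show ?thesis using ed[of "2*w-t"] 2 by simp
    next
      case 3
      have a: "rect w x y ! (2*w+1) = P x (y+1)" using assms by (simp add: nth_rect rp_hi)
      have b: "rect w x y ! ((2*w+1+1) mod (2*w+2)) = P x y"
        by (simp add: nth_rect rp_lo)
      have "e = {rect w x y ! (2*w+1), rect w x y ! ((2*w+1+1) mod (2*w+2))}"
        unfolding a b 3 V_def by blast
      then show ?thesis using ed[of "2*w+1"] by simp
    next
      case 4
      have a: "rect w x y ! w = P (x + int w) y" by (simp add: nth_rect rp_lo)
      have b: "rect w x y ! ((w+1) mod (2*w+2)) = P (x + int w) (y+1)" using assms
        by (simp add: nth_rect rp_hi)
      show ?thesis using ed[of w] unfolding a b 4 V_def by simp
    qed
  qed
qed

lemma seg_H: "closed_segment (P x y) (P (x+1) y) = {z. Im z = of_int y \<and> of_int x \<le> Re z \<and> Re z \<le> of_int x + 1}"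
proof (rule set_eqI, rule iffI)
  fix z assume "z \<in> closed_segment (P x y) (P (x+1) y)"
  then obtain u where u: "z = (1 - u) *\<^sub>R P x y + u *\<^sub>R P (x+1) y" "0 \<le> u" "u \<le> 1"
    by (auto simp: in_segment)
  have "Re z = of_int x + u" "Im z = of_int y" unfolding u(1) by (simp_all add: algebra_simps)
  then show "z \<in> {z. Im z = of_int y \<and> of_int x \<le> Re z \<and> Re z \<le> of_int x + 1}" using u by auto
next
  fix z assume z: "z \<in> {z. Im z = of_int y \<and> of_int x \<le> Re z \<and> Re z \<le> of_int x + 1}"
  define u where "u = Re z - of_int x"
  have "z = (1 - u) *\<^sub>R P x y + u *\<^sub>R P (x+1) y"
    using z by (intro complex_eqI) (simp_all add: u_def algebra_simps)
  moreover have "0 \<le> u" "u \<le> 1" using z by (auto simp: u_def)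
  ultimately show "z \<in> closed_segment (P x y) (P (x+1) y)" by (auto simp: in_segment)
qed

lemma seg_V: "closed_segment (P x y) (P x (y+1)) = {z. Re z = of_int x \<and> of_int y \<le> Im z \<and> Im z \<le> of_int y + 1}"
proof (rule set_eqI, rule iffI)
  fix z assume "z \<in> closed_segment (P x y) (P x (y+1))"
  then obtain u where u: "z = (1 - u) *\<^sub>R P x y + u *\<^sub>R P x (y+1)" "0 \<le> u" "u \<le> 1"
    by (auto simp: in_segment)
  have "Im z = of_int y + u" "Re z = of_int x" unfolding u(1) by (simp_all add: algebra_simps)
  then show "z \<in> {z. Re z = of_int x \<and> of_int y \<le> Im z \<and> Im z \<le> of_int y + 1}" using u by auto
next
  fix z assume z: "z \<in> {z. Re z = of_int x \<and> of_int y \<le> Im z \<and> Im z \<le> of_int y + 1}"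
  define u where "u = Im z - of_int y"
  have "z = (1 - u) *\<^sub>R P x y + u *\<^sub>R P x (y+1)"
    using z by (intro complex_eqI) (simp_all add: u_def algebra_simps)
  moreover have "0 \<le> u" "u \<le> 1" using z by (auto simp: u_def)
  ultimately show "z \<in> closed_segment (P x y) (P x (y+1))" by (auto simp: in_segment)
qed

definition gam :: "complex set \<Rightarrow> real \<Rightarrow> complex" where
  "gam e = linepath (SOME a. a \<in> e) (SOME b. b \<in> e \<and> b \<noteq> (SOME a. a \<in> e))"

lemma gam_props:
  assumes "p \<noteq> q"
  shows "arc (gam {p,q})" "{pathstart (gam {p,q}), pathfinish (gam {p,q})} = {p,q}"
    "path_image (gam {p,q}) = closed_segment p q"
proof -
  define a where "a = (SOME a. a \<in> {p,q})"
  have a: "a \<in> {p,q}" unfolding a_def by (rule someI[of _ p]) simp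
  define b where "b = (SOME b. b \<in> {p,q} \<and> b \<noteq> a)"
  have b: "b \<in> {p,q} \<and> b \<noteq> a" unfolding b_def
    by (rule someI_ex) (use a assms in auto)
  have g: "gam {p,q} = linepath a b" unfolding gam_def a_def b_def by simp
  have ab: "{a,b} = {p,q}" using a b by auto
  show "arc (gam {p,q})" using b g arc_linepath by metis
  show "{pathstart (gam {p,q}), pathfinish (gam {p,q})} = {p,q}" using g ab by simp
  show "path_image (gam {p,q}) = closed_segment p q"
    using a b g assms by (auto simp: closed_segment_commute)
qed

definition hs :: "int \<Rightarrow> int \<Rightarrow> complex set" where
  "hs x y = {z. Im z = of_int y \<and> of_int x \<le> Re z \<and> Re z \<le> of_int x + 1}"
definition vs :: "int \<Rightarrow> int \<Rightarrow> complex set" where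
  "vs x y = {z. Re z = of_int x \<and> of_int y \<le> Im z \<and> Im z \<le> of_int y + 1}"

lemma pi_H: "path_image (gam (H x y)) = hs x y"
  unfolding H_def hs_def by (subst gam_props(3)) (auto simp: seg_H)
lemma pi_V: "path_image (gam (V x y)) = vs x y"
  unfolding V_def vs_def by (subst gam_props(3)) (auto simp: seg_V)
lemma arc_H: "arc (gam (H x y))" "{pathstart (gam (H x y)), pathfinish (gam (H x y))} = H x y"
  unfolding H_def by (rule gam_props; simp)+
lemma arc_V: "arc (gam (V x y))" "{pathstart (gam (V x y)), pathfinish (gam (V x y))} = V x y"
  unfolding V_def by (rule gam_props; simp)+

lemma int_of_le: "(of_int a :: real) \<le> r \<Longrightarrow> r < of_int b \<Longrightarrow> a < b"
  by (metis le_less_trans of_int_less_iff)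
lemma int_of_le2: "(of_int a :: real) < r \<Longrightarrow> r \<le> of_int b \<Longrightarrow> a < b"
  by (metis less_le_trans of_int_less_iff)
lemma int_of_le3: "(of_int a :: real) \<le> r \<Longrightarrow> r \<le> of_int b \<Longrightarrow> a \<le> b"
  by (metis order_trans of_int_le_iff)

lemma hs_union:
  assumes "w \<ge> 1"
  shows "(\<Union>t<w. hs (x + int t) y) = {z. Im z = of_int y \<and> of_int x \<le> Re z \<and> Re z \<le> of_int x + of_nat w}"
proof (rule set_eqI, rule iffI)
  fix z assume "z \<in> (\<Union>t<w. hs (x + int t) y)"
  then obtain t where "t < w" "z \<in> hs (x + int t) y" by auto
  then show "z \<in> {z. Im z = of_int y \<and> of_int x \<le> Re z \<and> Re z \<le> of_int x + of_nat w}"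
    by (auto simp: hs_def)
next
  fix z assume z: "z \<in> {z. Im z = of_int y \<and> of_int x \<le> Re z \<and> Re z \<le> of_int x + of_nat w}"
  define t where "t = min (w - 1) (nat (\<lfloor>Re z\<rfloor> - x))"
  have "t < w" using assms by (simp add: t_def)
  moreover have "z \<in> hs (x + int t) y"
  proof -
    have f1: "of_int \<lfloor>Re z\<rfloor> \<le> Re z" "Re z < of_int \<lfloor>Re z\<rfloor> + 1" by linarith+
    have xf: "x \<le> \<lfloor>Re z\<rfloor>" using z by (simp add: le_floor_iff)
    show ?thesis
    proof (cases "nat (\<lfloor>Re z\<rfloor> - x) \<le> w - 1")
      case True
      then have "int t = \<lfloor>Re z\<rfloor> - x" using xf by (simp add: t_def)
      then show ?thesis using z f1 by (simp add: hs_def)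
    next
      case False
      then have "int t = int w - 1" using assms by (simp add: t_def of_nat_diff)
      moreover have "\<lfloor>Re z\<rfloor> - x \<ge> int w" using False by linarith
      then have "x + int w \<le> \<lfloor>Re z\<rfloor>" by linarith
      then have "real_of_int (x + int w) \<le> Re z" by (simp only: le_floor_iff)
      ultimately show ?thesis using z f1 assms by (simp add: hs_def)
    qed
  qed
  ultimately show "z \<in> (\<Union>t<w. hs (x + int t) y)" by auto
qed

lemma face_boundary_rect:
  assumes "w \<ge> 1"
  shows "face_boundary gam (rect w x y) = frontier (cbox (P x y) (P (x + int w) (y+1)))"
proof -
  have "face_boundary gam (rect w x y) = (\<Union>t<w. hs (x + int t) y) \<union> (\<Union>t<w. hs (x + int t) (y+1)) \<union> vs x y \<union> vs (x + int w) y"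
    unfolding face_boundary_def face_edges_rect[OF assms] by (auto simp: pi_H pi_V)
  also have "\<dots> = frontier (cbox (P x y) (P (x + int w) (y+1)))"
    unfolding hs_union[OF assms] frontier_cbox unfolding cbox_complex_eq box_complex_eq vs_def
    by auto
  finally show ?thesis .
qed

lemma face_region_rect:
  assumes "w \<ge> 1"
  shows "face_region gam (rect w x y) = cbox (P x y) (P (x + int w) (y+1))"
    "inside (face_boundary gam (rect w x y)) = box (P x y) (P (x + int w) (y+1))"
proof -
  let ?R = "cbox (P x y) (P (x + int w) (y+1))"
  have i: "inside (frontier ?R) = box (P x y) (P (x + int w) (y+1))"
    by (simp add: inside_frontier_eq_interior)
  then show "inside (face_boundary gam (rect w x y)) = box (P x y) (P (x + int w) (y+1))"
    using face_boundary_rect[OF assms] by simp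
  show "face_region gam (rect w x y) = ?R"
    unfolding face_region_def face_boundary_rect[OF assms] i unfolding frontier_cbox
    using box_subset_cbox by blast
qed

lemma P_eqI: "Re z = of_int a \<Longrightarrow> Im z = of_int b \<Longrightarrow> z = P a b"
  by (intro complex_eqI) simp_all

lemma H_eq[simp]: "H x y = H x' y' \<longleftrightarrow> x = x' \<and> y = y'"
  by (auto simp: H_def doubleton_eq_iff)
lemma V_eq[simp]: "V x y = V x' y' \<longleftrightarrow> x = x' \<and> y = y'"
  by (auto simp: V_def doubleton_eq_iff)
lemma H_ne_V[simp]: "H x y \<noteq> V x' y'"
  by (auto simp: H_def V_def doubleton_eq_iff)

lemma hs_hs: assumes "(x,y) \<noteq> (x',y')" shows "hs x y \<inter> hs x' y' \<subseteq> H x y \<inter> H x' y'"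
proof
  fix z assume z: "z \<in> hs x y \<inter> hs x' y'"
  then have yy: "y = y'" by (auto simp: hs_def)
  then have xx: "x \<noteq> x'" using assms by auto
  have r: "of_int x \<le> Re z" "Re z \<le> of_int (x + 1)" "of_int x' \<le> Re z" "Re z \<le> of_int (x' + 1)"
    using z by (auto simp: hs_def)
  have im: "Im z = of_int y" using z by (auto simp: hs_def)
  consider "x < x'" | "x' < x" using xx by linarith
  then show "z \<in> H x y \<inter> H x' y'"
  proof cases
    case 1
    have "x' \<le> x + 1" using int_of_le3[OF r(3) r(2)] .
    then have "x' = x + 1" using 1 by linarith
    then have "Re z = of_int (x+1)" using r by (metis antisym)
    then have "z = P (x+1) y" using im by (intro P_eqI)
    then show ?thesis using \<open>x' = x + 1\<close> yy by (auto simp: H_def)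
  next
    case 2
    have "x \<le> x' + 1" using int_of_le3[OF r(1) r(4)] .
    then have "x = x' + 1" using 2 by linarith
    then have "Re z = of_int (x'+1)" using r by (metis antisym)
    then have "z = P (x'+1) y" using im by (intro P_eqI)
    then show ?thesis using \<open>x = x' + 1\<close> yy by (auto simp: H_def)
  qed
qed

lemma vs_vs: assumes "(x,y) \<noteq> (x',y')" shows "vs x y \<inter> vs x' y' \<subseteq> V x y \<inter> V x' y'"
proof
  fix z assume z: "z \<in> vs x y \<inter> vs x' y'"
  then have xx: "x = x'" by (auto simp: vs_def)
  then have yy: "y \<noteq> y'" using assms by auto
  have r: "of_int y \<le> Im z" "Im z \<le> of_int (y + 1)" "of_int y' \<le> Im z" "Im z \<le> of_int (y' + 1)"
    using z by (auto simp: vs_def)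
  have re: "Re z = of_int x" using z by (auto simp: vs_def)
  consider "y < y'" | "y' < y" using yy by linarith
  then show "z \<in> V x y \<inter> V x' y'"
  proof cases
    case 1
    have "y' \<le> y + 1" using int_of_le3[OF r(3) r(2)] .
    then have "y' = y + 1" using 1 by linarith
    then have "Im z = of_int (y+1)" using r by (metis antisym)
    then have "z = P x (y+1)" using re by (intro P_eqI)
    then show ?thesis using \<open>y' = y + 1\<close> xx by (auto simp: V_def)
  next
    case 2
    have "y \<le> y' + 1" using int_of_le3[OF r(1) r(4)] .
    then have "y = y' + 1" using 2 by linarith
    then have "Im z = of_int (y'+1)" using r by (metis antisym)
    then have "z = P x (y'+1)" using re by (intro P_eqI)
    then show ?thesis using \<open>y = y' + 1\<close> xx by (auto simp: V_def)
  qed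
qed

lemma hs_vs: "hs x y \<inter> vs x' y' \<subseteq> H x y \<inter> V x' y'"
proof
  fix z assume z: "z \<in> hs x y \<inter> vs x' y'"
  have r: "of_int x \<le> Re z" "Re z \<le> of_int (x + 1)" "of_int y' \<le> Im z" "Im z \<le> of_int (y' + 1)"
    and e: "Re z = of_int x'" "Im z = of_int y"
    using z by (auto simp: hs_def vs_def)
  have "x \<le> x'" "x' \<le> x + 1" "y' \<le> y" "y \<le> y' + 1" using r e by simp_all
  moreover have "z = P x' y" using e by (intro P_eqI)
  ultimately show "z \<in> H x y \<inter> V x' y'"
    by (cases "x' = x"; cases "y = y'") (auto simp: H_def V_def)
qed

lemma P_in_hs: "P c d \<in> hs x y \<Longrightarrow> P c d \<in> H x y"
proof -
  assume "P c d \<in> hs x y"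
  then have "d = y" "x \<le> c" "c \<le> x + 1" by (simp_all add: hs_def)
  then show ?thesis by (cases "c = x") (auto simp: H_def)
qed

lemma P_in_vs: "P c d \<in> vs x y \<Longrightarrow> P c d \<in> V x y"
proof -
  assume "P c d \<in> vs x y"
  then have "c = x" "y \<le> d" "d \<le> y + 1" by (simp_all add: vs_def)
  then show ?thesis by (cases "d = y") (auto simp: V_def)
qed

definition Fam :: "(int \<Rightarrow> nat) \<Rightarrow> complex list set" where
  "Fam w = {rect (w y) (a * int (w y)) y | a y. True}"

locale strips =
  fixes w :: "int \<Rightarrow> nat"
  assumes wpos: "\<And>y. 1 \<le> w y" and adj: "\<And>y. w y = 1 \<or> w (y+1) = 1"
begin

abbreviation "FF \<equiv> Fam w"

lemma FF_cases: "f \<in> FF \<Longrightarrow> (\<And>a y. f = rect (w y) (a * int (w y)) y \<Longrightarrow> thesis) \<Longrightarrow> thesis"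
  unfolding Fam_def by blast

lemma FF_I: "rect (w y) (a * int (w y)) y \<in> FF"
  unfolding Fam_def by blast

lemma edges_FF: "map_edges FF = {H x y | x y. True} \<union> {V x y | x y. int (w y) dvd x}"
  (is "?L = ?R")
proof
  show "?L \<subseteq> ?R"
  proof
    fix e assume "e \<in> ?L"
    then obtain f where f: "f \<in> FF" "e \<in> face_edges f" by (auto simp: map_edges_def)
    then obtain a y where fa: "f = rect (w y) (a * int (w y)) y" unfolding Fam_def by blast
    have "(a + 1) * int (w y) = a * int (w y) + int (w y)" by (simp add: algebra_simps)
    then have "int (w y) dvd a * int (w y) + int (w y)" by (metis dvd_triv_right)
    then show "e \<in> ?R" using f(2) unfolding fa face_edges_rect[OF wpos] by auto
  qed
next
  show "?R \<subseteq> ?L"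
  proof
    fix e assume "e \<in> ?R"
    then consider x y where "e = H x y" | x y where "e = V x y" "int (w y) dvd x" by blast
    then show "e \<in> ?L"
    proof cases
      case (1 x y)
      define W where "W = int (w y)"
      have Wp: "W > 0" using wpos[of y] by (simp add: W_def)
      define a where "a = x div W"
      define t where "t = nat (x mod W)"
      have xe: "x = a * W + int t" using Wp by (simp add: a_def t_def)
      have "x mod W < W" "0 \<le> x mod W" using Wp by simp_all
      then have "t < w y" by (simp add: t_def W_def nat_less_iff)
      then have "H (a * int (w y) + int t) y \<in> face_edges (rect (w y) (a * int (w y)) y)"
        unfolding face_edges_rect[OF wpos] by blast
      then have "e \<in> face_edges (rect (w y) (a * int (w y)) y)" using 1 xe W_def by simp
      then show ?thesis using FF_I unfolding map_edges_def by blast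
    next
      case (2 x y)
      then obtain a where xe: "x = a * int (w y)" by (metis dvd_def mult.commute)
      have "V (a * int (w y)) y \<in> face_edges (rect (w y) (a * int (w y)) y)"
        unfolding face_edges_rect[OF wpos] by blast
      then show ?thesis using FF_I 2 xe unfolding map_edges_def by blast
    qed
  qed
qed

lemma verts_FF: "map_vertices FF = {P c d | c d. True}"
proof
  show "map_vertices FF \<subseteq> {P c d | c d. True}"
    unfolding map_vertices_def Fam_def using rect_elem by blast
next
  show "{P c d | c d. True} \<subseteq> map_vertices FF"
  proof
    fix z assume "z \<in> {P c d | c d. True}"
    then obtain c d where z: "z = P c d" by blast
    define W where "W = int (w d)"
    have Wp: "W > 0" using wpos[of d] by (simp add: W_def)
    define a where "a = c div W"
    have m: "0 \<le> c mod W" "c mod W < W" using Wp by simp_all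
    have "c = a * W + c mod W" unfolding a_def by simp
    then have "a * W \<le> c" "c \<le> a * W + W" using m by linarith+
    then have "z \<in> set (rect (w d) (a * int (w d)) d)" unfolding z mem_rect W_def by simp
    then show "z \<in> map_vertices FF" unfolding map_vertices_def using FF_I by blast
  qed
qed

lemma graph_FF: "z \<in> graph_image FF gam \<longleftrightarrow> (\<exists>x y. z \<in> hs x y) \<or> (\<exists>x y. int (w y) dvd x \<and> z \<in> vs x y)"
proof -
  have "z \<in> graph_image FF gam \<longleftrightarrow> (\<exists>e\<in>{H x y | x y. True}. z \<in> path_image (gam e)) \<or> (\<exists>e\<in>{V x y | x y. int (w y) dvd x}. z \<in> path_image (gam e))"
    unfolding graph_image_def edges_FF by blast
  also have "(\<exists>e\<in>{H x y | x y. True}. z \<in> path_image (gam e)) \<longleftrightarrow> (\<exists>x y. z \<in> hs x y)"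
  proof
    assume "\<exists>e\<in>{H x y | x y. True}. z \<in> path_image (gam e)"
    then obtain x y where "z \<in> path_image (gam (H x y))" by blast
    then show "\<exists>x y. z \<in> hs x y" unfolding pi_H by blast
  next
    assume "\<exists>x y. z \<in> hs x y"
    then obtain x y where "z \<in> path_image (gam (H x y))" unfolding pi_H by blast
    then show "\<exists>e\<in>{H x y | x y. True}. z \<in> path_image (gam e)" by blast
  qed
  also have "(\<exists>e\<in>{V x y | x y. int (w y) dvd x}. z \<in> path_image (gam e)) \<longleftrightarrow> (\<exists>x y. int (w y) dvd x \<and> z \<in> vs x y)"
  proof
    assume "\<exists>e\<in>{V x y | x y. int (w y) dvd x}. z \<in> path_image (gam e)"
    then obtain x y where "int (w y) dvd x" "z \<in> path_image (gam (V x y))" by blast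
    then show "\<exists>x y. int (w y) dvd x \<and> z \<in> vs x y" unfolding pi_V by blast
  next
    assume "\<exists>x y. int (w y) dvd x \<and> z \<in> vs x y"
    then obtain x y where "int (w y) dvd x" "z \<in> path_image (gam (V x y))" unfolding pi_V by blast
    then show "\<exists>e\<in>{V x y | x y. int (w y) dvd x}. z \<in> path_image (gam e)" by blast
  qed
  finally show ?thesis .
qed

end

context strips begin

lemma FF_form: "f \<in> FF \<Longrightarrow> \<exists>a y. f = rect (w y) (a * int (w y)) y"
  unfolding Fam_def by blast

lemma conn: "connected (graph_image FF gam)"
proof -
  define Ln where "Ln y = {z::complex. Im z = of_int y}" for y :: int
  define Ax where "Ax = {z::complex. Re z = 0}"
  have cLn: "connected (Ln y)" for y
  proof -
    have "Ln y = {z. inner \<i> z = of_int y}" by (simp add: Ln_def)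
    then show ?thesis using convex_hyperplane convex_connected by metis
  qed
  have cAx: "connected Ax"
  proof -
    have "Ax = {z. inner 1 z = 0}" by (simp add: Ax_def)
    then show ?thesis using convex_hyperplane convex_connected by metis
  qed
  have chs: "connected (hs x y)" for x y unfolding hs_def seg_H[symmetric] by simp
  have cvs: "connected (vs x y)" for x y unfolding vs_def seg_V[symmetric] by simp
  have LG: "Ln y \<subseteq> graph_image FF gam" for y
  proof
    fix z assume "z \<in> Ln y"
    then have "z \<in> hs \<lfloor>Re z\<rfloor> y" by (simp add: Ln_def hs_def)
    then show "z \<in> graph_image FF gam" using graph_FF by blast
  qed
  have AG: "Ax \<subseteq> graph_image FF gam"
  proof
    fix z assume "z \<in> Ax"
    then have "z \<in> vs 0 \<lfloor>Im z\<rfloor>" by (simp add: Ax_def vs_def)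
    moreover have "int (w \<lfloor>Im z\<rfloor>) dvd 0" by simp
    ultimately show "z \<in> graph_image FF gam" using graph_FF by blast
  qed
  define T where "T = {hs x y \<union> Ln y \<union> Ax | x y. True} \<union> {vs x y \<union> Ln y \<union> Ax | x y. int (w y) dvd x}"
  have "\<Union>T = graph_image FF gam"
  proof
    show "\<Union>T \<subseteq> graph_image FF gam"
    proof
      fix z assume "z \<in> \<Union>T"
      then obtain s where "s \<in> T" "z \<in> s" by blast
      then consider x y where "z \<in> hs x y \<union> Ln y \<union> Ax" | x y where "int (w y) dvd x" "z \<in> vs x y \<union> Ln y \<union> Ax"
        unfolding T_def by blast
      then show "z \<in> graph_image FF gam"
        by cases (use LG AG graph_FF in blast)+
    qed
    show "graph_image FF gam \<subseteq> \<Union>T"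
    proof
      fix z assume "z \<in> graph_image FF gam"
      then consider x y where "z \<in> hs x y" | x y where "int (w y) dvd x" "z \<in> vs x y" using graph_FF by blast
      then show "z \<in> \<Union>T" unfolding T_def by cases blast+
    qed
  qed
  moreover have "connected (\<Union>T)"
  proof (rule connected_Union)
    fix s assume "s \<in> T"
    then consider x y where "s = hs x y \<union> Ln y \<union> Ax" | x y where "s = vs x y \<union> Ln y \<union> Ax" unfolding T_def by blast
    then show "connected s"
    proof cases
      case (1 x y)
      have a: "P x y \<in> hs x y \<inter> Ln y" by (simp add: hs_def Ln_def)
      have b: "P 0 y \<in> (hs x y \<union> Ln y) \<inter> Ax" by (simp add: Ln_def Ax_def)
      show ?thesis unfolding 1 by (intro connected_Un chs cLn cAx) (use a b in blast)+
    next
      case (2 x y)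
      have a: "P x y \<in> vs x y \<inter> Ln y" by (simp add: vs_def Ln_def)
      have b: "P 0 y \<in> (vs x y \<union> Ln y) \<inter> Ax" by (simp add: Ln_def Ax_def)
      show ?thesis unfolding 2 by (intro connected_Un cvs cLn cAx) (use a b in blast)+
    qed
  next
    have "0 \<in> \<Inter>T" unfolding T_def Ax_def by auto
    then show "\<Inter>T \<noteq> {}" by blast
  qed
  ultimately show ?thesis by simp
qed

lemma region_FF: "face_region gam (rect (w y) (a * int (w y)) y) = cbox (P (a * int (w y)) y) (P (a * int (w y) + int (w y)) (y+1))"
  "inside (face_boundary gam (rect (w y) (a * int (w y)) y)) = box (P (a * int (w y)) y) (P (a * int (w y) + int (w y)) (y+1))"
  using face_region_rect[OF wpos] by simp_all

lemma cover: "(\<Union>f\<in>FF. face_region gam f) = UNIV"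
proof -
  have "z \<in> (\<Union>f\<in>FF. face_region gam f)" for z
  proof -
    define y where "y = \<lfloor>Im z\<rfloor>"
    define W where "W = int (w y)"
    have Wp: "W > 0" using wpos[of y] by (simp add: W_def)
    define c where "c = \<lfloor>Re z\<rfloor>"
    define a where "a = c div W"
    have m: "0 \<le> c mod W" "c mod W < W" using Wp by simp_all
    have "c = a * W + c mod W" unfolding a_def by simp
    then have "a * W \<le> c" "c + 1 \<le> a * W + W" using m by linarith+
    moreover have "of_int c \<le> Re z" "Re z < of_int c + 1" unfolding c_def by linarith+
    ultimately have "of_int (a*W) \<le> Re z" "Re z \<le> of_int (a*W + W)"
      by (metis of_int_le_iff order_trans, smt (verit) of_int_1 of_int_add of_int_le_iff)
    moreover have "of_int y \<le> Im z" "Im z \<le> of_int y + 1" unfolding y_def by linarith+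
    ultimately have "z \<in> cbox (P (a*W) y) (P (a*W + W) (y+1))" by (simp add: cbox_complex_eq)
    then have "z \<in> face_region gam (rect (w y) (a * int (w y)) y)" unfolding region_FF W_def .
    then show ?thesis using FF_I by blast
  qed
  then show ?thesis by blast
qed

lemma inside_graph: assumes "f \<in> FF" shows "inside (face_boundary gam f) \<inter> graph_image FF gam = {}"
proof (rule ccontr)
  obtain a y where f: "f = rect (w y) (a * int (w y)) y" using FF_form assms by blast
  define W where "W = int (w y)"
  have Wp: "W > 0" using wpos[of y] by (simp add: W_def)
  assume "inside (face_boundary gam f) \<inter> graph_image FF gam \<noteq> {}"
  then obtain z where z1: "z \<in> box (P (a*W) y) (P (a*W + W) (y+1))" and z2: "z \<in> graph_image FF gam"
    unfolding f region_FF W_def by blast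
  have b: "of_int (a*W) < Re z" "Re z < of_int (a*W+W)" "of_int y < Im z" "Im z < of_int (y+1)"
    using z1 by (auto simp: box_complex_eq)
  from z2 consider x' y' where "z \<in> hs x' y'" | x' y' where "int (w y') dvd x'" "z \<in> vs x' y'"
    using graph_FF by blast
  then show False
  proof cases
    case (1 x' y')
    then have "Im z = of_int y'" by (simp add: hs_def)
    then have "y < y'" "y' < y + 1" using b by simp_all
    then show False by linarith
  next
    case (2 x' y')
    then have r: "Re z = of_int x'" "of_int y' \<le> Im z" "Im z \<le> of_int (y'+1)" by (simp_all add: vs_def)
    have "y' < y + 1" using int_of_le[OF r(2) b(4)] .
    moreover have "y < y' + 1" using int_of_le2[OF b(3) r(3)] .
    ultimately have "y' = y" by linarith
    then obtain k where k: "x' = k * W" using 2 W_def by (metis dvd_def mult.commute)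
    have "real_of_int (a * W) < real_of_int (k * W)" using b(1) r(1) k by simp
    then have "a * W < k * W" by (simp only: of_int_less_iff)
    then have "a < k" using Wp by (simp add: mult_less_cancel_right_pos)
    have "real_of_int ((a + 1) * W) = real_of_int (a*W+W)" by (simp add: algebra_simps)
    then have "real_of_int (k * W) < real_of_int ((a + 1) * W)" using b(2) r(1) k by simp
    then have "k * W < (a + 1) * W" by (simp only: of_int_less_iff)
    then have "k < a + 1" using Wp by (simp add: mult_less_cancel_right_pos)
    then show False using \<open>a < k\<close> by linarith
  qed
qed

lemma inside_disj: assumes "f \<in> FF" "g \<in> FF" "f \<noteq> g"
  shows "inside (face_boundary gam f) \<inter> inside (face_boundary gam g) = {}"
proof (rule ccontr)
  obtain a y where f: "f = rect (w y) (a * int (w y)) y" using FF_form assms by blast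
  obtain a' y' where g: "g = rect (w y') (a' * int (w y')) y'" using FF_form assms by blast
  assume "inside (face_boundary gam f) \<inter> inside (face_boundary gam g) \<noteq> {}"
  then obtain z where z1: "z \<in> box (P (a * int (w y)) y) (P (a * int (w y) + int (w y)) (y+1))"
    and z2: "z \<in> box (P (a' * int (w y')) y') (P (a' * int (w y') + int (w y')) (y'+1))"
    unfolding f g region_FF by blast
  have b: "of_int (a * int (w y)) < Re z" "Re z < of_int (a * int (w y) + int (w y))" "of_int y < Im z" "Im z < of_int (y+1)"
    using z1 by (auto simp: box_complex_eq)
  have b': "of_int (a' * int (w y')) < Re z" "Re z < of_int (a' * int (w y') + int (w y'))" "of_int y' < Im z" "Im z < of_int (y'+1)"
    using z2 by (auto simp: box_complex_eq)
  have "y < y' + 1" "y' < y + 1" using b(3) b'(4) b'(3) b(4) by (metis less_trans of_int_less_iff)+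
  then have yy: "y' = y" by linarith
  define W where "W = int (w y)"
  have Wp: "W > 0" using wpos[of y] by (simp add: W_def)
  have e1: "real_of_int ((a' + 1) * W) = real_of_int (a'*W+W)" by (simp add: algebra_simps)
  have b2: "Re z < real_of_int (a' * W + W)" "real_of_int (a' * W) < Re z" using b'(1,2) yy W_def by simp_all
  have b3: "Re z < real_of_int (a * W + W)" "real_of_int (a * W) < Re z" using b(1,2) W_def by simp_all
  have "real_of_int (a * W) < real_of_int ((a' + 1) * W)" using b3 b2 e1 by linarith
  then have "a * W < (a' + 1) * W" by (simp only: of_int_less_iff)
  then have "a < a' + 1" using Wp by (simp add: mult_less_cancel_right_pos)
  have e2: "real_of_int ((a + 1) * W) = real_of_int (a*W+W)" by (simp add: algebra_simps)
  have "real_of_int (a' * W) < real_of_int ((a + 1) * W)" using b3 b2 e2 by linarith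
  then have "a' * W < (a + 1) * W" by (simp only: of_int_less_iff)
  then have "a' < a + 1" using Wp by (simp add: mult_less_cancel_right_pos)
  then have "a = a'" using \<open>a < a' + 1\<close> by linarith
  then show False using assms(3) f g yy by simp
qed

end

lemma int_aux1: "a * W \<le> M \<Longrightarrow> (1::int) \<le> W \<Longrightarrow> 0 \<le> M \<Longrightarrow> a \<le> M"
proof (cases "a \<ge> 0")
  case True
  assume "a * W \<le> M" "1 \<le> W"
  then have "a * 1 \<le> a * W" using True by (intro mult_left_mono) simp_all
  then show ?thesis using \<open>a * W \<le> M\<close> by simp
qed simp

lemma int_aux2: "- M \<le> a * W + W \<Longrightarrow> (1::int) \<le> W \<Longrightarrow> 0 \<le> M \<Longrightarrow> - M - 1 \<le> a"
proof (cases "a + 1 \<le> 0")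
  case True
  assume h: "- M \<le> a * W + W" "1 \<le> W"
  have "(a + 1) * W \<le> (a + 1) * 1" using True h(2) by (intro mult_left_mono_neg) simp_all
  then show ?thesis using h(1) by (simp add: algebra_simps)
qed simp

lemma set_int: "z \<in> set (rect W1 x1 y1) \<inter> set (rect W2 x2 y2) \<longleftrightarrow>
  (\<exists>c d. z = P c d \<and> x1 \<le> c \<and> c \<le> x1 + int W1 \<and> x2 \<le> c \<and> c \<le> x2 + int W2 \<and> (d = y1 \<or> d = y1+1) \<and> (d = y2 \<or> d = y2+1))"
proof
  assume z: "z \<in> set (rect W1 x1 y1) \<inter> set (rect W2 x2 y2)"
  then obtain c d where "z = P c d" using rect_elem by blast
  then show "\<exists>c d. z = P c d \<and> x1 \<le> c \<and> c \<le> x1 + int W1 \<and> x2 \<le> c \<and> c \<le> x2 + int W2 \<and> (d = y1 \<or> d = y1+1) \<and> (d = y2 \<or> d = y2+1)"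
    using z mem_rect by auto
next
  assume "\<exists>c d. z = P c d \<and> x1 \<le> c \<and> c \<le> x1 + int W1 \<and> x2 \<le> c \<and> c \<le> x2 + int W2 \<and> (d = y1 \<or> d = y1+1) \<and> (d = y2 \<or> d = y2+1)"
  then show "z \<in> set (rect W1 x1 y1) \<inter> set (rect W2 x2 y2)" using mem_rect by auto
qed

definition PI :: "complex list \<Rightarrow> complex list \<Rightarrow> bool" where
  "PI f g \<longleftrightarrow> set f \<inter> set g = {} \<or> card (set f \<inter> set g) = 1 \<or>
         (set f \<inter> set g \<in> face_edges f \<and> set f \<inter> set g \<in> face_edges g)"

lemma PI_sym: "PI f g \<Longrightarrow> PI g f"
  unfolding PI_def by (simp add: Int_commute) blast

lemma dd_aux: "((d::int) = y1 \<or> d = y1+1) \<and> (d = y1+1 \<or> d = y1+1+1) \<longleftrightarrow> d = y1+1" by linarith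

lemma PI_C:
  assumes "W2 \<ge> 1" "W1 = 1"
  shows "PI (rect W1 a1 y1) (rect W2 x2 (y1+1))"
proof -
  let ?S = "set (rect W1 a1 y1) \<inter> set (rect W2 x2 (y1+1))"
  have S: "z \<in> ?S \<longleftrightarrow> (\<exists>c. z = P c (y1+1) \<and> a1 \<le> c \<and> c \<le> a1 + 1 \<and> x2 \<le> c \<and> c \<le> x2 + int W2)" for z
    unfolding set_int dd_aux assms(2) by auto
  have c01: "a1 \<le> c \<Longrightarrow> c \<le> a1 + 1 \<Longrightarrow> c = a1 \<or> c = a1 + 1" for c by linarith
  consider "x2 \<le> a1 \<and> a1 + 1 \<le> x2 + int W2" | "x2 \<le> a1 \<and> a1 \<le> x2 + int W2 \<and> \<not> (a1 + 1 \<le> x2 + int W2)"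
    | "\<not> (x2 \<le> a1 \<and> a1 \<le> x2 + int W2) \<and> (x2 \<le> a1 + 1 \<and> a1 + 1 \<le> x2 + int W2)"
    | "\<not> (x2 \<le> a1 \<and> a1 \<le> x2 + int W2) \<and> \<not> (x2 \<le> a1 + 1 \<and> a1 + 1 \<le> x2 + int W2)" by linarith
  then show ?thesis
  proof cases
    case 1
    have "?S = H a1 (y1+1)"
    proof (rule set_eqI)
      fix z show "z \<in> ?S \<longleftrightarrow> z \<in> H a1 (y1+1)" unfolding S H_def using 1 c01 by auto
    qed
    moreover have "H a1 (y1+1) \<in> face_edges (rect W1 a1 y1)"
    proof -
      have "H (a1 + int 0) (y1+1) \<in> face_edges (rect W1 a1 y1)"
        unfolding face_edges_rect[OF eq_imp_le[OF assms(2)[symmetric]]] using assms(2) by blast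
      then show ?thesis by simp
    qed
    moreover have "H a1 (y1+1) \<in> face_edges (rect W2 x2 (y1+1))"
    proof -
      define t where "t = nat (a1 - x2)"
      have "t < W2" "x2 + int t = a1" using 1 by (auto simp: t_def)
      then have "H (x2 + int t) (y1+1) \<in> face_edges (rect W2 x2 (y1+1))"
        unfolding face_edges_rect[OF assms(1)] by blast
      then show ?thesis using \<open>x2 + int t = a1\<close> by simp
    qed
    ultimately show ?thesis unfolding PI_def by simp
  next
    case 2
    have "?S = {P a1 (y1+1)}"
    proof (rule set_eqI)
      fix z show "z \<in> ?S \<longleftrightarrow> z \<in> {P a1 (y1+1)}" unfolding S using 2 c01 by auto
    qed
    then show ?thesis unfolding PI_def by simp
  next
    case 3
    have "?S = {P (a1+1) (y1+1)}"
    proof (rule set_eqI)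
      fix z show "z \<in> ?S \<longleftrightarrow> z \<in> {P (a1+1) (y1+1)}" unfolding S using 3 c01 by auto
    qed
    then show ?thesis unfolding PI_def by simp
  next
    case 4
    have "?S = {}"
    proof (rule set_eqI)
      fix z show "z \<in> ?S \<longleftrightarrow> z \<in> {}" unfolding S using 4 c01 by auto
    qed
    then show ?thesis unfolding PI_def by simp
  qed
qed

lemma PI_D:
  assumes "W1 \<ge> 1" "W2 = 1"
  shows "PI (rect W1 x1 y1) (rect W2 a2 (y1+1))"
proof -
  let ?S = "set (rect W1 x1 y1) \<inter> set (rect W2 a2 (y1+1))"
  have S: "z \<in> ?S \<longleftrightarrow> (\<exists>c. z = P c (y1+1) \<and> a2 \<le> c \<and> c \<le> a2 + 1 \<and> x1 \<le> c \<and> c \<le> x1 + int W1)" for z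
    unfolding set_int dd_aux assms(2) by auto
  have c01: "a2 \<le> c \<Longrightarrow> c \<le> a2 + 1 \<Longrightarrow> c = a2 \<or> c = a2 + 1" for c by linarith
  consider "x1 \<le> a2 \<and> a2 + 1 \<le> x1 + int W1" | "x1 \<le> a2 \<and> a2 \<le> x1 + int W1 \<and> \<not> (a2 + 1 \<le> x1 + int W1)"
    | "\<not> (x1 \<le> a2 \<and> a2 \<le> x1 + int W1) \<and> (x1 \<le> a2 + 1 \<and> a2 + 1 \<le> x1 + int W1)"
    | "\<not> (x1 \<le> a2 \<and> a2 \<le> x1 + int W1) \<and> \<not> (x1 \<le> a2 + 1 \<and> a2 + 1 \<le> x1 + int W1)" by linarith
  then show ?thesis
  proof cases
    case 1
    have "?S = H a2 (y1+1)"
    proof (rule set_eqI)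
      fix z show "z \<in> ?S \<longleftrightarrow> z \<in> H a2 (y1+1)" unfolding S H_def using 1 c01 by auto
    qed
    moreover have "H a2 (y1+1) \<in> face_edges (rect W2 a2 (y1+1))"
    proof -
      have "H (a2 + int 0) (y1+1) \<in> face_edges (rect W2 a2 (y1+1))"
        unfolding face_edges_rect[OF eq_imp_le[OF assms(2)[symmetric]]] using assms(2) by blast
      then show ?thesis by simp
    qed
    moreover have "H a2 (y1+1) \<in> face_edges (rect W1 x1 y1)"
    proof -
      define t where "t = nat (a2 - x1)"
      have "t < W1" "x1 + int t = a2" using 1 by (auto simp: t_def)
      then have "H (x1 + int t) (y1+1) \<in> face_edges (rect W1 x1 y1)"
        unfolding face_edges_rect[OF assms(1)] by blast
      then show ?thesis using \<open>x1 + int t = a2\<close> by simp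
    qed
    ultimately show ?thesis unfolding PI_def by simp
  next
    case 2
    have "?S = {P a2 (y1+1)}"
    proof (rule set_eqI)
      fix z show "z \<in> ?S \<longleftrightarrow> z \<in> {P a2 (y1+1)}" unfolding S using 2 c01 by auto
    qed
    then show ?thesis unfolding PI_def by simp
  next
    case 3
    have "?S = {P (a2+1) (y1+1)}"
    proof (rule set_eqI)
      fix z show "z \<in> ?S \<longleftrightarrow> z \<in> {P (a2+1) (y1+1)}" unfolding S using 3 c01 by auto
    qed
    then show ?thesis unfolding PI_def by simp
  next
    case 4
    have "?S = {}"
    proof (rule set_eqI)
      fix z show "z \<in> ?S \<longleftrightarrow> z \<in> {}" unfolding S using 4 c01 by auto
    qed
    then show ?thesis unfolding PI_def by simp
  qed
qed

lemma PI_far: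
  assumes "y1 + 2 \<le> y2"
  shows "PI (rect W1 x1 y1) (rect W2 x2 y2)"
proof -
  have "set (rect W1 x1 y1) \<inter> set (rect W2 x2 y2) = {}"
  proof (rule equals0I)
    fix z assume "z \<in> set (rect W1 x1 y1) \<inter> set (rect W2 x2 y2)"
    then obtain d where "d = y1 \<or> d = y1+1" "d = y2 \<or> d = y2+1" unfolding set_int by blast
    then show False using assms by linarith
  qed
  then show ?thesis unfolding PI_def by simp
qed

lemma PI_row:
  assumes "W \<ge> 1" "a1 < a2"
  shows "PI (rect W (a1 * int W) y) (rect W (a2 * int W) y)"
proof (cases "a2 = a1 + 1")
  case True
  let ?S = "set (rect W (a1 * int W) y) \<inter> set (rect W (a2 * int W) y)"
  have e: "a2 * int W = a1 * int W + int W" using True by (simp add: algebra_simps)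
  have "?S = V (a2 * int W) y"
  proof
    show "?S \<subseteq> V (a2 * int W) y"
    proof
      fix z assume "z \<in> ?S"
      then obtain c d where cd: "z = P c d" "c \<le> a1 * int W + int W" "a2 * int W \<le> c" "d = y \<or> d = y + 1"
        unfolding set_int by blast
      then have "c = a2 * int W" using e by linarith
      then show "z \<in> V (a2 * int W) y" using cd unfolding V_def by auto
    qed
    show "V (a2 * int W) y \<subseteq> ?S"
    proof
      fix z assume z: "z \<in> V (a2 * int W) y"
      have "a1 * int W \<le> a2 * int W" using e by simp
      then show "z \<in> ?S" using z e unfolding V_def set_int by auto
    qed
  qed
  moreover have "V (a2 * int W) y \<in> face_edges (rect W (a1 * int W) y)"
    unfolding face_edges_rect[OF assms(1)] e by blast
  moreover have "V (a2 * int W) y \<in> face_edges (rect W (a2 * int W) y)"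
    unfolding face_edges_rect[OF assms(1)] by blast
  ultimately show ?thesis unfolding PI_def by simp
next
  case False
  then have "a1 + 1 < a2" using assms by linarith
  then have "(a1 + 1) * int W < a2 * int W" using assms(1) by (intro mult_strict_right_mono) simp_all
  then have lt: "a1 * int W + int W < a2 * int W" by (simp add: algebra_simps)
  have "set (rect W (a1 * int W) y) \<inter> set (rect W (a2 * int W) y) = {}"
  proof (rule equals0I)
    fix z assume "z \<in> set (rect W (a1 * int W) y) \<inter> set (rect W (a2 * int W) y)"
    then obtain c where "c \<le> a1 * int W + int W" "a2 * int W \<le> c" unfolding set_int by blast
    then show False using lt by linarith
  qed
  then show ?thesis unfolding PI_def by simp
qed

context strips begin

lemma PI_ord:
  assumes "y1 < y2 \<or> (y1 = y2 \<and> a1 < a2)"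
  shows "PI (rect (w y1) (a1 * int (w y1)) y1) (rect (w y2) (a2 * int (w y2)) y2)"
proof -
  consider "y1 + 2 \<le> y2" | "y2 = y1 + 1" | "y1 = y2 \<and> a1 < a2" using assms by linarith
  then show ?thesis
  proof cases
    case 1 then show ?thesis by (rule PI_far)
  next
    case 2
    from adj[of y1] show ?thesis
    proof
      assume h: "w y1 = 1"
      have "PI (rect (w y1) (a1 * int (w y1)) y1) (rect (w y2) (a2 * int (w y2)) (y1+1))"
        by (rule PI_C[OF wpos h])
      then show ?thesis using 2 by simp
    next
      assume h: "w (y1 + 1) = 1"
      then have h': "w y2 = 1" using 2 by simp
      have "PI (rect (w y1) (a1 * int (w y1)) y1) (rect (w y2) (a2 * int (w y2)) (y1+1))"
        by (rule PI_D[OF wpos h'])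
      then show ?thesis using 2 by simp
    qed
  next
    case 3
    then have "y2 = y1" "a1 < a2" by simp_all
    have "PI (rect (w y1) (a1 * int (w y1)) y1) (rect (w y1) (a2 * int (w y1)) y1)"
      by (rule PI_row[OF wpos \<open>a1 < a2\<close>])
    then show ?thesis using \<open>y2 = y1\<close> by simp
  qed
qed

lemma PI_FF: assumes "f \<in> FF" "g \<in> FF" "f \<noteq> g" shows "PI f g"
proof -
  obtain a1 y1 where f: "f = rect (w y1) (a1 * int (w y1)) y1" using FF_form assms by blast
  obtain a2 y2 where g: "g = rect (w y2) (a2 * int (w y2)) y2" using FF_form assms by blast
  have ne: "\<not> (a1 = a2 \<and> y1 = y2)"
  proof
    assume "a1 = a2 \<and> y1 = y2"
    then have "f = g" unfolding f g by simp
    then show False using assms(3) by simp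
  qed
  have "(y1 < y2 \<or> (y1 = y2 \<and> a1 < a2)) \<or> (y2 < y1 \<or> (y2 = y1 \<and> a2 < a1))"
  proof (cases "y1 = y2")
    case True
    then have "a1 \<noteq> a2" using ne by blast
    then show ?thesis using True by (simp add: neq_iff)
  next
    case False
    then show ?thesis by (auto simp add: neq_iff)
  qed
  then show ?thesis
  proof
    assume "y1 < y2 \<or> (y1 = y2 \<and> a1 < a2)" then show ?thesis unfolding f g by (rule PI_ord)
  next
    assume "y2 < y1 \<or> (y2 = y1 \<and> a2 < a1)" then have "PI g f" unfolding f g by (rule PI_ord)
    then show ?thesis by (rule PI_sym)
  qed
qed

lemma loc_fin: assumes "compact K" shows "finite {f\<in>FF. face_region gam f \<inter> K \<noteq> {}}"
proof -
  obtain r where r: "\<forall>z\<in>K. norm z \<le> r" using compact_imp_bounded[OF assms] bounded_iff by metis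
  define M where "M = \<lceil>\<bar>r\<bar>\<rceil>"
  have M0: "0 \<le> M" unfolding M_def by simp
  have rM: "r \<le> of_int M" "\<bar>r\<bar> \<le> of_int M" unfolding M_def by linarith+
  define N where "N = M + 1"
  have "{f\<in>FF. face_region gam f \<inter> K \<noteq> {}} \<subseteq> (\<lambda>(a,y). rect (w y) (a * int (w y)) y) ` ({-N..N} \<times> {-N..N})"
  proof
    fix f assume "f \<in> {f\<in>FF. face_region gam f \<inter> K \<noteq> {}}"
    then have fF: "f \<in> FF" and ne: "face_region gam f \<inter> K \<noteq> {}" by auto
    obtain a y where f: "f = rect (w y) (a * int (w y)) y" using FF_form fF by blast
    define W where "W = int (w y)"
    have W1: "1 \<le> W" using wpos[of y] by (simp add: W_def)
    obtain z where zK: "z \<in> K" and zR: "z \<in> cbox (P (a*W) y) (P (a*W + W) (y+1))"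
      using ne unfolding f region_FF W_def by blast
    have nz: "norm z \<le> r" using r zK by blast
    have re: "\<bar>Re z\<bar> \<le> of_int M" "\<bar>Im z\<bar> \<le> of_int M"
      using abs_Re_le_cmod[of z] abs_Im_le_cmod[of z] nz rM by linarith+
    have b: "of_int (a*W) \<le> Re z" "Re z \<le> of_int (a*W+W)" "of_int y \<le> Im z" "Im z \<le> of_int (y+1)"
      using zR by (auto simp: cbox_complex_eq)
    have "y \<le> M" using b(3) re(2) by (metis abs_le_D1 int_of_le3)
    have "- M \<le> y + 1" using b(4) re(2) by (metis abs_le_D2 int_of_le3 minus_le_iff of_int_minus)
    have "a * W \<le> M" using b(1) re(1) by (metis abs_le_D1 int_of_le3)
    then have "a \<le> M" using W1 M0 by (rule int_aux1)
    have "- M \<le> a * W + W" using b(2) re(1) by (metis abs_le_D2 int_of_le3 minus_le_iff of_int_minus)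
    then have "- M - 1 \<le> a" using W1 M0 by (rule int_aux2)
    have "(a, y) \<in> {-N..N} \<times> {-N..N}" using \<open>y \<le> M\<close> \<open>- M \<le> y + 1\<close> \<open>a \<le> M\<close> \<open>- M - 1 \<le> a\<close> M0
      unfolding N_def by auto
    then show "f \<in> (\<lambda>(a,y). rect (w y) (a * int (w y)) y) ` ({-N..N} \<times> {-N..N})"
      unfolding f by force
  qed
  then show ?thesis by (rule finite_subset) simp
qed

lemma poly_FF: "polyhedral_plane_map FF gam"
  unfolding polyhedral_plane_map_def
proof (intro conjI)
  show "FF \<noteq> {}" using FF_I by blast
  show "\<forall>f\<in>FF. distinct f \<and> 3 \<le> length f"
    using FF_form distinct_rect wpos by fastforce
  show "\<forall>e\<in>map_edges FF. arc (gam e) \<and> {pathstart (gam e), pathfinish (gam e)} = e"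
    unfolding edges_FF using arc_H arc_V by blast
  show "\<forall>e\<in>map_edges FF. \<forall>e'\<in>map_edges FF. e \<noteq> e' \<longrightarrow> path_image (gam e) \<inter> path_image (gam e') \<subseteq> e \<inter> e'"
  proof (intro ballI impI)
    fix e e' assume e: "e \<in> map_edges FF" and e': "e' \<in> map_edges FF" and ne: "e \<noteq> e'"
    from e consider x y where "e = H x y" | x y where "e = V x y" unfolding edges_FF by blast
    then show "path_image (gam e) \<inter> path_image (gam e') \<subseteq> e \<inter> e'"
    proof cases
      case (1 x y)
      from e' consider x' y' where "e' = H x' y'" | x' y' where "e' = V x' y'" unfolding edges_FF by blast
      then show ?thesis
      proof cases
        case (1 x' y') then show ?thesis using \<open>e = H x y\<close> ne hs_hs[of x y x' y'] by (auto simp: pi_H)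
      next
        case (2 x' y') then show ?thesis using \<open>e = H x y\<close> hs_vs[of x y x' y'] by (auto simp: pi_H pi_V)
      qed
    next
      case (2 x y)
      from e' consider x' y' where "e' = H x' y'" | x' y' where "e' = V x' y'" unfolding edges_FF by blast
      then show ?thesis
      proof cases
        case (1 x' y') then show ?thesis using \<open>e = V x y\<close> hs_vs[of x' y' x y] by (auto simp: pi_H pi_V)
      next
        case (2 x' y') then show ?thesis using \<open>e = V x y\<close> ne vs_vs[of x y x' y'] by (auto simp: pi_V)
      qed
    qed
  qed
  show "\<forall>v\<in>map_vertices FF. \<forall>e\<in>map_edges FF. v \<in> path_image (gam e) \<longrightarrow> v \<in> e"
    unfolding verts_FF edges_FF using P_in_hs P_in_vs by (auto simp: pi_H pi_V)
  show "connected (graph_image FF gam)" by (rule conn)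
  show "(\<Union>f\<in>FF. face_region gam f) = UNIV" by (rule cover)
  show "\<forall>f\<in>FF. inside (face_boundary gam f) \<inter> graph_image FF gam = {}" using inside_graph by blast
  show "\<forall>f\<in>FF. \<forall>g\<in>FF. f \<noteq> g \<longrightarrow> inside (face_boundary gam f) \<inter> inside (face_boundary gam g) = {}"
    using inside_disj by blast
  show "\<forall>K. compact K \<longrightarrow> finite {f\<in>FF. face_region gam f \<inter> K \<noteq> {}}" using loc_fin by blast
  show "\<forall>f\<in>FF. \<forall>g\<in>FF. f \<noteq> g \<longrightarrow> set f \<inter> set g = {} \<or> card (set f \<inter> set g) = 1 \<or>
         (set f \<inter> set g \<in> face_edges f \<and> set f \<inter> set g \<in> face_edges g)"
    using PI_FF unfolding PI_def by blast
qed

end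

lemma divrange:
  fixes W x a :: int
  assumes "0 < W"
  shows "(a*W \<le> x \<and> x \<le> a*W + W) \<longleftrightarrow> (a = x div W \<or> a = (x - 1) div W)"
proof
  assume h: "a*W \<le> x \<and> x \<le> a*W + W"
  show "a = x div W \<or> a = (x - 1) div W"
  proof (cases "x < a*W + W")
    case True
    have "x div W = a" by (rule int_div_pos_eq[of x W a "x - a*W"]) (use h True in \<open>simp_all add: algebra_simps\<close>)
    then show ?thesis by simp
  next
    case False
    then have "x = a*W + W" using h by simp
    have "(x - 1) div W = a" by (rule int_div_pos_eq[of "x-1" W a "W - 1"]) (use \<open>x = a*W + W\<close> assms in \<open>simp_all add: algebra_simps\<close>)
    then show ?thesis by simp
  qed
next
  assume h: "a = x div W \<or> a = (x - 1) div W"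
  have m1: "0 \<le> x mod W" "x mod W < W" "x = W * (x div W) + x mod W" using assms by simp_all
  have m2: "0 \<le> (x-1) mod W" "(x-1) mod W < W" "x - 1 = W * ((x-1) div W) + (x-1) mod W" using assms by simp_all
  from h show "a*W \<le> x \<and> x \<le> a*W + W"
  proof
    assume a: "a = x div W"
    have e: "x div W * W = x - x mod W" by (simp add: minus_mod_eq_div_mult)
    show ?thesis unfolding a using e m1(1,2) by linarith
  next
    assume a: "a = (x - 1) div W"
    have e: "(x - 1) div W * W = (x - 1) - (x - 1) mod W" by (simp add: minus_mod_eq_div_mult)
    show ?thesis unfolding a using e m2(1,2) by linarith
  qed
qed

lemma div_pred_eq:
  fixes W x :: int
  assumes "0 < W"
  shows "(x - 1) div W = (if W dvd x then x div W - 1 else x div W)"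
proof (cases "W dvd x")
  case True
  then obtain k where k: "x = W * k" by blast
  have "(x - 1) div W = k - 1" by (rule int_div_pos_eq[of "x-1" W "k - 1" "W - 1"]) (use k assms in \<open>simp_all add: algebra_simps\<close>)
  moreover have "x div W = k" using k assms by simp
  ultimately show ?thesis using True by simp
next
  case False
  then have "x mod W \<noteq> 0" by (simp add: dvd_eq_mod_eq_0)
  then have m: "1 \<le> x mod W" "x mod W < W" using assms pos_mod_sign[of W x] pos_mod_bound[of W x] by linarith+
  have e: "x - 1 = W * (x div W) + (x mod W - 1)" by simp
  have "(x - 1) div W = x div W" by (rule int_div_pos_eq[OF e]) (use m in linarith)+
  then show ?thesis using False by simp
qed

lemma fc3:
  assumes "distinct [f1,f2,f3]" "set [f1,f2,f3] = {f\<in>F. u \<in> set f}"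
    "{u,wa} \<in> face_edges f1" "{u,wa} \<in> face_edges f2"
    "{u,wb} \<in> face_edges f2" "{u,wb} \<in> face_edges f3"
    "{u,wc} \<in> face_edges f3" "{u,wc} \<in> face_edges f1"
  shows "face_cycle F u [f1,f2,f3]"
  unfolding face_cycle_def
proof (intro conjI allI impI)
  fix i assume "i < length [f1,f2,f3]"
  then have "i = 0 \<or> i = 1 \<or> i = 2" by auto
  then show "\<exists>w. {u, w} \<in> face_edges ([f1,f2,f3] ! i) \<and> {u, w} \<in> face_edges ([f1,f2,f3] ! ((i + 1) mod length [f1,f2,f3]))"
    using assms by auto
qed (use assms in auto)

lemma fc4:
  assumes "distinct [f1,f2,f3,f4]" "set [f1,f2,f3,f4] = {f\<in>F. u \<in> set f}"
    "{u,wa} \<in> face_edges f1" "{u,wa} \<in> face_edges f2"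
    "{u,wb} \<in> face_edges f2" "{u,wb} \<in> face_edges f3"
    "{u,wc} \<in> face_edges f3" "{u,wc} \<in> face_edges f4"
    "{u,we} \<in> face_edges f4" "{u,we} \<in> face_edges f1"
  shows "face_cycle F u [f1,f2,f3,f4]"
  unfolding face_cycle_def
proof (intro conjI allI impI)
  fix i assume "i < length [f1,f2,f3,f4]"
  then have "i = 0 \<or> i = 1 \<or> i = 2 \<or> i = 3" by auto
  then show "\<exists>w. {u, w} \<in> face_edges ([f1,f2,f3,f4] ! i) \<and> {u, w} \<in> face_edges ([f1,f2,f3,f4] ! ((i + 1) mod length [f1,f2,f3,f4]))"
    using assms by auto
qed (use assms in auto)

definition wd :: "nat \<Rightarrow> int \<Rightarrow> nat" where
  "wd n y = (if even y then 1 else n)"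

lemma strips_wd: "1 \<le> n \<Longrightarrow> strips (wd n)"
  by unfold_locales (auto simp: wd_def)

context strips begin

definition R :: "int \<Rightarrow> int \<Rightarrow> complex list" where
  "R r a = rect (w r) (a * int (w r)) r"

lemma R_FF: "R r a \<in> FF" unfolding R_def by (rule FF_I)

lemma R_inj: "R r a = R r' a' \<Longrightarrow> r = r' \<and> a = a'"
proof -
  assume h: "R r a = R r' a'"
  have "R r a ! 0 = P (a * int (w r)) r" unfolding R_def by (simp add: nth_rect rp_def)
  moreover have "R r' a' ! 0 = P (a' * int (w r')) r'" unfolding R_def by (simp add: nth_rect rp_def)
  ultimately have "P (a * int (w r)) r = P (a' * int (w r')) r'" using h by metis
  then have e: "a * int (w r) = a' * int (w r')" "r = r'" by (simp only: P_inj)+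
  then have "a * int (w r) = a' * int (w r)" by simp
  moreover have "int (w r) \<noteq> 0" using wpos[of r] by simp
  ultimately show ?thesis using e(2) by simp
qed

lemma len_R: "length (R r a) = 2 * w r + 2" unfolding R_def by simp

lemma faces_at: "{f\<in>FF. P x y \<in> set f} = {R y ((x-1) div int (w y)), R y (x div int (w y)), R (y-1) ((x-1) div int (w (y-1))), R (y-1) (x div int (w (y-1)))}"
  (is "?L = ?R")
proof
  show "?L \<subseteq> ?R"
  proof
    fix f assume "f \<in> ?L"
    then obtain r a where f: "f = R r a" and u: "P x y \<in> set (R r a)" unfolding R_def using FF_form by blast
    have W: "0 < int (w r)" using wpos[of r] by simp
    from u have a: "a * int (w r) \<le> x \<and> x \<le> a * int (w r) + int (w r)" and r: "y = r \<or> y = r + 1"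
      unfolding R_def mem_rect by simp_all
    from a have "a = x div int (w r) \<or> a = (x - 1) div int (w r)" using divrange[OF W] by blast
    then show "f \<in> ?R" using r f by auto
  qed
next
  have mem: "P x y \<in> set (R r a)" if "a = x div int (w r) \<or> a = (x - 1) div int (w r)" "y = r \<or> y = r + 1" for r a
  proof -
    have W: "0 < int (w r)" using wpos[of r] by simp
    show ?thesis unfolding R_def mem_rect using that divrange[OF W, of a x] by simp
  qed
  show "?R \<subseteq> ?L" using mem R_FF by auto
qed

lemma H_low: "H z r \<in> face_edges (R r (z div int (w r)))"
proof -
  have W: "0 < int (w r)" using wpos[of r] by simp
  define t where "t = nat (z mod int (w r))"
  have "z mod int (w r) < int (w r)" "0 \<le> z mod int (w r)" using W by simp_all
  then have t: "t < w r" "z div int (w r) * int (w r) + int t = z" by (simp_all add: t_def nat_less_iff)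
  then have "H z r = H (z div int (w r) * int (w r) + int t) r" by simp
  then show ?thesis unfolding R_def face_edges_rect[OF wpos] using t(1) by blast
qed

lemma H_up: "H z (r+1) \<in> face_edges (R r (z div int (w r)))"
proof -
  have W: "0 < int (w r)" using wpos[of r] by simp
  define t where "t = nat (z mod int (w r))"
  have "z mod int (w r) < int (w r)" "0 \<le> z mod int (w r)" using W by simp_all
  then have t: "t < w r" "z div int (w r) * int (w r) + int t = z" by (simp_all add: t_def nat_less_iff)
  then have "H z (r+1) = H (z div int (w r) * int (w r) + int t) (r+1)" by simp
  then show ?thesis unfolding R_def face_edges_rect[OF wpos] using t(1) by blast
qed

lemma V_left: "int (w r) dvd z \<Longrightarrow> V z r \<in> face_edges (R r (z div int (w r)))"
  unfolding R_def face_edges_rect[OF wpos] by auto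

lemma V_right: "int (w r) dvd z \<Longrightarrow> V z r \<in> face_edges (R r ((z - 1) div int (w r)))"
proof -
  assume d: "int (w r) dvd z"
  have W: "0 < int (w r)" using wpos[of r] by simp
  have "(z - 1) div int (w r) = z div int (w r) - 1" using div_pred_eq[OF W] d by simp
  moreover have "(z div int (w r) - 1) * int (w r) + int (w r) = z" using d by (simp add: algebra_simps)
  ultimately show ?thesis unfolding R_def face_edges_rect[OF wpos] by auto
qed

end

lemma exp1: "expand_type [(4,2),(L,1)] = [4,4,L]" by (simp add: expand_type_def numeral_2_eq_2)
lemma exp2: "expand_type [(4,2),(L,2)] = [4,4,L,L]" by (simp add: expand_type_def numeral_2_eq_2)

lemma valid2: "L \<noteq> 4 \<Longrightarrow> 1 \<le> k \<Longrightarrow> valid_type [(4,2),(L,k)]"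
  unfolding valid_type_def
proof (intro conjI impI allI)
  fix i assume "L \<noteq> 4" "i < length [(4::nat,2::nat),(L,k)]"
  then have "i = 0 \<or> i = 1" by auto
  then show "fst ([(4::nat,2::nat),(L,k)] ! i) \<noteq> fst ([(4,2),(L,k)] ! ((i + 1) mod length [(4::nat,2::nat),(L,k)]))"
    using \<open>L \<noteq> 4\<close> by auto
qed auto

locale tw =
  fixes n :: nat
  assumes n2: "2 \<le> n"

sublocale tw \<subseteq> strips "wd n"
  using n2 by (intro strips_wd) simp

context tw begin

lemma R_neq: "r \<noteq> r' \<or> a \<noteq> a' \<Longrightarrow> R r a \<noteq> R r' a'"
  using R_inj by blast

lemma vertex_type:
  assumes "u \<in> map_vertices FF"
  shows "has_type FF u [(4,2),(2*n+2,1)] \<or> has_type FF u [(4,2),(2*n+2,2)]"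
proof -
  obtain x y where u: "u = P x y" using assms unfolding verts_FF by blast
  define Wu where "Wu = int (wd n y)"
  define Wl where "Wl = int (wd n (y-1))"
  have Wu0: "0 < Wu" and Wl0: "0 < Wl" using wpos[of y] wpos[of "y-1"] by (simp_all add: Wu_def Wl_def)
  define AL where "AL = R y ((x-1) div Wu)"
  define AR where "AR = R y (x div Wu)"
  define BL where "BL = R (y-1) ((x-1) div Wl)"
  define BR where "BR = R (y-1) (x div Wl)"
  have faces: "{f\<in>FF. u \<in> set f} = {AL, AR, BL, BR}"
    unfolding u faces_at AL_def AR_def BL_def BR_def Wu_def Wl_def by simp
  have Hx: "H x y = {u, P (x+1) y}" unfolding u H_def by simp
  have Hx1: "H (x-1) y = {u, P (x-1) y}" unfolding u H_def by auto
  have Vx: "V x y = {u, P x (y+1)}" unfolding u V_def by simp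
  have Vx1: "V x (y-1) = {u, P x (y-1)}" unfolding u V_def by auto
  have eAR: "{u, P (x+1) y} \<in> face_edges AR" unfolding AR_def Wu_def Hx[symmetric] by (rule H_low)
  have eAL: "{u, P (x-1) y} \<in> face_edges AL" unfolding AL_def Wu_def Hx1[symmetric] by (rule H_low)
  have eBR: "{u, P (x+1) y} \<in> face_edges BR"
    using H_up[of x "y-1"] unfolding BR_def Wl_def Hx[symmetric] by simp
  have eBL: "{u, P (x-1) y} \<in> face_edges BL"
    using H_up[of "x-1" "y-1"] unfolding BL_def Wl_def Hx1[symmetric] by simp
  have eVA: "{u, P x (y+1)} \<in> face_edges AL \<and> {u, P x (y+1)} \<in> face_edges AR" if "Wu dvd x"
    using V_left[of y x] V_right[of y x] that unfolding AL_def AR_def Wu_def Vx[symmetric] by simp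
  have eVB: "{u, P x (y-1)} \<in> face_edges BL \<and> {u, P x (y-1)} \<in> face_edges BR" if "Wl dvd x"
    using V_left[of "y-1" x] V_right[of "y-1" x] that unfolding BL_def BR_def Wl_def Vx1[symmetric] by simp
  have ALAR: "AL = AR \<longleftrightarrow> \<not> Wu dvd x"
  proof -
    have "(x-1) div Wu = (if Wu dvd x then x div Wu - 1 else x div Wu)" by (rule div_pred_eq[OF Wu0])
    then show ?thesis unfolding AL_def AR_def by (cases "Wu dvd x") (auto dest!: R_inj)
  qed
  have BLBR: "BL = BR \<longleftrightarrow> \<not> Wl dvd x"
  proof -
    have "(x-1) div Wl = (if Wl dvd x then x div Wl - 1 else x div Wl)" by (rule div_pred_eq[OF Wl0])
    then show ?thesis unfolding BL_def BR_def by (cases "Wl dvd x") (auto dest!: R_inj)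
  qed
  have AB: "AL \<noteq> BL" "AL \<noteq> BR" "AR \<noteq> BL" "AR \<noteq> BR"
    unfolding AL_def AR_def BL_def BR_def by (auto intro!: R_neq)
  have lens: "length AL = 2 * nat Wu + 2" "length AR = 2 * nat Wu + 2" "length BL = 2 * nat Wl + 2" "length BR = 2 * nat Wl + 2"
    unfolding AL_def AR_def BL_def BR_def Wu_def Wl_def len_R by simp_all
  show ?thesis
  proof (cases "even y")
    case True
    then have wu: "Wu = 1" and wl: "Wl = int n" by (simp_all add: Wu_def Wl_def wd_def)
    have ne: "AL \<noteq> AR" using ALAR wu by simp
    show ?thesis
    proof (cases "Wl dvd x")
      case True
      have "face_cycle FF u [AL, AR, BR, BL]"
        by (rule fc4[where wa = "P x (y+1)" and wb = "P (x+1) y" and wc = "P x (y-1)" and we = "P (x-1) y"]) (use ne AB BLBR True faces eAR eAL eBR eBL eVA[of] eVB wu in auto)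
      moreover have "map length [AL, AR, BR, BL] = expand_type [(4,2),(2*n+2,2)]"
        unfolding exp2 using lens wu wl by simp
      ultimately show ?thesis unfolding has_type_def by blast
    next
      case False
      then have bb: "BL = BR" using BLBR by simp
      have "face_cycle FF u [AL, AR, BR]"
        by (rule fc3[where wa = "P x (y+1)" and wb = "P (x+1) y" and wc = "P (x-1) y"]) (use ne AB bb faces eAR eAL eBR eBL eVA wu in auto)
      moreover have "map length [AL, AR, BR] = expand_type [(4,2),(2*n+2,1)]"
        unfolding exp1 using lens wu wl by simp
      ultimately show ?thesis unfolding has_type_def by blast
    qed
  next
    case False
    then have wu: "Wu = int n" and wl: "Wl = 1" by (simp_all add: Wu_def Wl_def wd_def)
    have ne: "BL \<noteq> BR" using BLBR wl by simp
    show ?thesis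
    proof (cases "Wu dvd x")
      case True
      have "face_cycle FF u [BR, BL, AL, AR]"
        by (rule fc4[where wa = "P x (y-1)" and wb = "P (x-1) y" and wc = "P x (y+1)" and we = "P (x+1) y"]) (use ne AB ALAR True faces eAR eAL eBR eBL eVA eVB wl in auto)
      moreover have "map length [BR, BL, AL, AR] = expand_type [(4,2),(2*n+2,2)]"
        unfolding exp2 using lens wu wl by simp
      ultimately show ?thesis unfolding has_type_def by blast
    next
      case False
      then have aa: "AL = AR" using ALAR by simp
      have "face_cycle FF u [BR, BL, AR]"
        by (rule fc3[where wa = "P x (y-1)" and wb = "P (x-1) y" and wc = "P (x+1) y"]) (use ne AB aa faces eAR eAL eBR eBL eVB wl in auto)
      moreover have "map length [BR, BL, AR] = expand_type [(4,2),(2*n+2,1)]"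
        unfolding exp1 using lens wu wl by simp
      ultimately show ?thesis unfolding has_type_def by blast
    qed
  qed
qed

lemma semi: "two_semiequivelar FF"
  unfolding two_semiequivelar_def
proof (intro exI conjI)
  show "valid_type [(4,2),(2*n+2,1)]" using n2 by (intro valid2) simp_all
  show "valid_type [(4,2),(2*n+2,2)]" using n2 by (intro valid2) simp_all
  show "\<forall>u\<in>map_vertices FF. has_type FF u [(4,2),(2*n+2,1)] \<or> has_type FF u [(4,2),(2*n+2,2)]"
    using vertex_type by blast
qed

lemma lengths: "f \<in> FF \<Longrightarrow> length f = 4 \<or> length f = 2*n+2"
  using FF_form by (fastforce simp: wd_def)

lemma big_face: "R 1 0 \<in> FF \<and> length (R 1 0) = 2*n+2"
  using R_FF len_R by (simp add: wd_def)

end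

lemma cyc_len: "cyc_equiv xs ys \<Longrightarrow> length ys = length xs"
  unfolding cyc_equiv_def by auto

lemma iso_len: "map_iso F1 F2 \<Longrightarrow> f \<in> F1 \<Longrightarrow> \<exists>g\<in>F2. length g = length f"
  unfolding map_iso_def using cyc_len by fastforce

lemma fam_n:
  assumes "2 \<le> n" "2 \<le> m" "\<exists>g\<in>Fam (wd m). length g = 2*n+2"
  shows "n = m"
proof -
  obtain g where g: "g \<in> Fam (wd m)" "length g = 2*n+2" using assms(3) by blast
  have "tw m" using assms(2) by (simp add: tw_def)
  then have "length g = 4 \<or> length g = 2*m+2" using tw.lengths g(1) by blast
  then show ?thesis using g(2) assms(1) by auto
qed

lemma big: "2 \<le> n \<Longrightarrow> \<exists>f\<in>Fam (wd n). length f = 2*n+2"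
proof -
  assume "2 \<le> n"
  then have "tw n" by (simp add: tw_def)
  then show ?thesis using tw.big_face by blast
qed

theorem mainTheorem16:
  shows "\<exists>S :: (complex list set \<times> (complex set \<Rightarrow> real \<Rightarrow> complex)) set.
           infinite S \<and>
           (\<forall>(F, \<gamma>)\<in>S. polyhedral_plane_map F \<gamma> \<and> two_semiequivelar F) \<and>
           (\<forall>M\<in>S. \<forall>N\<in>S. M \<noteq> N \<longrightarrow> \<not> map_iso (fst M) (fst N))"
proof -
  define G where "G n = (Fam (wd n), gam)" for n
  define S where "S = G ` {2..}"
  have inj: "inj_on G {2..}"
  proof (rule inj_onI)
    fix n m assume n: "n \<in> {2..}" and m: "m \<in> {2..}" and e: "G n = G m"
    then have "Fam (wd n) = Fam (wd m)" unfolding G_def by simp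
    then show "n = m" using big[of n] fam_n[of n m] n m by auto
  qed
  have "infinite S" unfolding S_def using inj infinite_Ici finite_imageD by blast
  moreover have "\<forall>(F, \<gamma>)\<in>S. polyhedral_plane_map F \<gamma> \<and> two_semiequivelar F"
  proof
    fix M assume "M \<in> S"
    then obtain n where n: "2 \<le> n" "M = (Fam (wd n), gam)" unfolding S_def G_def by auto
    then have "tw n" by (simp add: tw_def)
    have "strips (wd n)" using n by (intro strips_wd) simp
    then have "polyhedral_plane_map (Fam (wd n)) gam" by (rule strips.poly_FF)
    moreover have "two_semiequivelar (Fam (wd n))" using \<open>tw n\<close> by (rule tw.semi)
    ultimately show "case M of (F, \<gamma>) \<Rightarrow> polyhedral_plane_map F \<gamma> \<and> two_semiequivelar F"
      using n by simp
  qed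
  moreover have "\<forall>M\<in>S. \<forall>N\<in>S. M \<noteq> N \<longrightarrow> \<not> map_iso (fst M) (fst N)"
  proof (intro ballI impI notI)
    fix M N assume M: "M \<in> S" and N: "N \<in> S" and ne: "M \<noteq> N" and iso: "map_iso (fst M) (fst N)"
    obtain n where n: "2 \<le> n" "M = (Fam (wd n), gam)" using M unfolding S_def G_def by auto
    obtain m where m: "2 \<le> m" "N = (Fam (wd m), gam)" using N unfolding S_def G_def by auto
    obtain f where f: "f \<in> Fam (wd n)" "length f = 2*n+2" using big[OF n(1)] by blast
    have "\<exists>g\<in>Fam (wd m). length g = 2*n+2" using iso_len[of "Fam (wd n)" "Fam (wd m)" f] iso n m f by auto
    then have "n = m" using fam_n n m by blast
    then show False using ne n m by simp
  qed
  ultimately show ?thesis by blast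
qed

end
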